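(* Fix $\alpha>1$, $R>0$, an integer $T>1$, $G_c>0$, $N_0>0$ and $\beta,\delta,\mu>0$. For $\rho_r>0$ put $\Theta(\rho_r)=(\alpha,\rho_r,\beta\rho_r,\delta\rho_r,\mu\rho_r,T)$ and $\eta^\star_{zf}(R,\Theta)=\frac{G_c}{N_0}\zeta^\star_{zf}(R,\Theta)$. If $\rho_{r_2}>\rho_{r_1}>0$, then $\eta^\star_{zf}(R,\Theta(\rho_{r_1}))>\eta^\star_{zf}(R,\Theta(\rho_{r_2}))$.
   Context: For $\Theta=(\alpha,\rho_r,\rho_d,\rho_s,\rho_0,T)$ and $M>K$, $1\le K\le\tau<T$ let $$\gamma_u=\frac{K+\tau}{2\tau(M-K)}\Big(2^{\frac{R}{K(1-\tau/T)}}-1\Big)+\sqrt{\Big(\frac{K+\tau}{2\tau(M-K)}\Big(2^{\frac{R}{K(1-\tau/T)}}-1\Big)\Big)^2+\frac{2^{\frac{R}{K(1-\tau/T)}}-1}{\tau(M-K)}},$$ $$\frac{R}{\zeta_{zf}(M,K,\tau,R,\Theta)}=\alpha K\gamma_u+\rho_s+K\Big(\rho_d+\frac{8K^2\rho_0}{3T}\Big)+M\Big(\rho_r+2K\rho_0+\frac{4K^2\rho_0}{T}\Big).$$ $\zeta^\star_{zf}(R,\Theta)$ is the maximum of $\zeta_{zf}$ over integers $(M,K,\tau)$ with $1\le K\le\tau<T$, $M>K$. *)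

theory Defs
  imports Complex_Main
begin

text \<open>Theta = (alpha, rho_r, rho_d, rho_s, rho_0, T) is passed as a tuple.\<close>
type_synonym params = "real \<times> real \<times> real \<times> real \<times> real \<times> nat"

definition gamma_u :: "nat \<Rightarrow> nat \<Rightarrow> nat \<Rightarrow> real \<Rightarrow> nat \<Rightarrow> real" where
  "gamma_u M K tau R T =
    (let e = 2 powr (R / (real K * (1 - real tau / real T))) - 1;
         a = (real K + real tau) / (2 * real tau * (real M - real K)) * e
     in a + sqrt (a\<^sup>2 + e / (real tau * (real M - real K))))"

definition zeta_zf :: "nat \<Rightarrow> nat \<Rightarrow> nat \<Rightarrow> real \<Rightarrow> params \<Rightarrow> real" where
  "zeta_zf M K tau R Theta =
    (case Theta of (alpha, rr, rd, rs, r0, T) \<Rightarrow>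
      R / (alpha * real K * gamma_u M K tau R T + rs
           + real K * (rd + 8 * (real K)\<^sup>2 * r0 / (3 * real T))
           + real M * (rr + 2 * real K * r0 + 4 * (real K)\<^sup>2 * r0 / real T)))"

text \<open>The maximum over the feasible integer triples, written as a supremum
  (it is attained, so this is the maximum).\<close>
definition zeta_star :: "real \<Rightarrow> params \<Rightarrow> real" where
  "zeta_star R Theta =
    (case Theta of (alpha, rr, rd, rs, r0, T) \<Rightarrow>
      Sup {zeta_zf M K tau R Theta | M K tau.
             1 \<le> K \<and> K \<le> tau \<and> tau < T \<and> K < M})"

definition eta_star :: "real \<Rightarrow> real \<Rightarrow> real \<Rightarrow> params \<Rightarrow> real" where
  "eta_star Gc N0 R Theta = Gc / N0 * zeta_star R Theta"

end

theory Submission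
  imports Defs
begin

lemma key_ineq:
  fixes A B C r1 r2 R :: real
  assumes "A \<ge> 0" "B \<ge> 1" "A \<le> C" "0 < r1" "r1 < r2" "R > 0"
  shows "R / (A + r1 * B) \<ge> (1 + (r2 - r1) / (C + r1)) * (R / (A + r2 * B))"
proof -
  have "r1 * B > 0" "r2 * B > 0" using assms by simp_all
  hence p1: "A + r1 * B > 0" and p2: "A + r2 * B > 0" using assms(1) by (simp_all add: add_nonneg_pos)
  have pc: "C + r1 > 0" using assms by linarith
  have "1 * C \<le> B * C" using assms by (intro mult_right_mono) auto
  hence "A \<le> B * C" using assms by simp
  hence h: "A + r1 * B \<le> B * (C + r1)" by (simp add: algebra_simps)
  have "(r2 - r1) * (A + r1 * B) \<le> (r2 - r1) * B * (C + r1)"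
    using h assms by (simp add: mult_left_mono mult.assoc)
  hence "(r2 - r1) * (A + r1 * B) / (C + r1) \<le> (r2 - r1) * B"
    using pc by (simp add: divide_le_eq)
  hence "(1 + (r2 - r1) / (C + r1)) * (A + r1 * B) \<le> A + r2 * B"
    by (simp add: algebra_simps)
  hence "(1 + (r2 - r1) / (C + r1)) * (A + r1 * B) * R \<le> (A + r2 * B) * R"
    using assms by (simp add: mult_right_mono)
  thus ?thesis using p1 p2 by (simp add: field_simps)
qed

lemma abstract_sup:
  fixes A B :: "'a \<Rightarrow> real" and R r1 r2 :: real
  assumes "I \<noteq> {}" "\<And>i. i \<in> I \<Longrightarrow> A i \<ge> 0" "\<And>i. i \<in> I \<Longrightarrow> B i \<ge> 1"
    "0 < r1" "r1 < r2" "R > 0"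
  shows "Sup ((\<lambda>i. R / (A i + r2 * B i)) ` I) < Sup ((\<lambda>i. R / (A i + r1 * B i)) ` I)"
proof -
  define f where "f r i = R / (A i + r * B i)" for r i
  have pos: "f r i > 0" if "i \<in> I" "r > 0" for r i
  proof -
    have "r * B i > 0" using assms(3)[OF that(1)] that by simp
    thus ?thesis using assms(2)[OF that(1)] assms unfolding f_def by simp
  qed
  have ub: "f r i \<le> R / r" if "i \<in> I" "r > 0" for r i
  proof -
    have "r \<le> A i + r * B i" using assms(2,3)[OF that(1)] that
    proof -
      have "r * 1 \<le> r * B i" using assms(3)[OF that(1)] that by (intro mult_left_mono) auto
      thus ?thesis using assms(2)[OF that(1)] by simp
    qed
    thus ?thesis unfolding f_def using that assms by (simp add: frac_le)
  qed
  have bdd: "bdd_above (f r ` I)" if "r > 0" for r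
    using ub that by (auto intro!: bdd_aboveI[of _ "R/r"])
  define S1 where "S1 = Sup (f r1 ` I)"
  define S2 where "S2 = Sup (f r2 ` I)"
  obtain i0 where i0: "i0 \<in> I" using assms(1) by auto
  have S2pos: "S2 > 0"
    using cSup_upper[OF imageI[OF i0] bdd[of r2]] pos[OF i0, of r2] assms unfolding S2_def by auto
  define C where "C = 2 * R / S2"
  define q where "q = 1 + (r2 - r1) / (C + r1)"
  have Cpos: "C > 0" using S2pos assms unfolding C_def by simp
  have qgt: "q > 1" using Cpos assms unfolding q_def by simp
  have main: "f r2 i \<le> max (S1 / q) (S2 / 2)" if i: "i \<in> I" for i
  proof (cases "f r2 i \<ge> S2 / 2")
    case True
    have d: "A i + r2 * B i > 0" using assms(2,3)[OF i] assms by (simp add: add_nonneg_pos)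
    have "S2 / 2 \<le> R / (A i + r2 * B i)" using True by (simp add: f_def)
    hence "S2 * (A i + r2 * B i) \<le> 2 * R" using d by (simp add: field_simps)
    hence "A i + r2 * B i \<le> C" using S2pos unfolding C_def by (simp add: field_simps)
    moreover have "r2 * B i \<ge> 0" using assms(3)[OF i] assms by simp
    ultimately have AC: "A i \<le> C" by linarith
    have "q * f r2 i \<le> f r1 i"
      using key_ineq[OF assms(2)[OF i] assms(3)[OF i] AC assms(4,5,6)] unfolding q_def f_def by simp
    also have "\<dots> \<le> S1" unfolding S1_def using cSup_upper[OF imageI[OF i] bdd[of r1]] assms by simp
    finally have "f r2 i \<le> S1 / q" using qgt by (simp add: field_simps)
    thus ?thesis by simp
  next
    case False thus ?thesis by simp
  qed
  have "Sup (f r2 ` I) \<le> max (S1 / q) (S2 / 2)"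
    using main assms(1) by (intro cSup_least) auto
  hence "S2 \<le> max (S1 / q) (S2 / 2)" by (simp only: S2_def[symmetric])
  hence "S2 \<le> S1 / q" using S2pos by (simp add: max_def split: if_splits)
  hence "q * S2 \<le> S1" using qgt by (simp add: field_simps)
  moreover have "S2 < q * S2" using qgt S2pos by simp
  ultimately show ?thesis unfolding S1_def S2_def f_def by simp
qed

theorem corollary2:
  fixes alpha R Gc N0 beta delta mu r1 r2 :: real and T :: nat
  assumes "alpha > 1" and "R > 0" and "T > 1" and "Gc > 0" and "N0 > 0"
    and "beta > 0" and "delta > 0" and "mu > 0"
    and "0 < r1" and "r1 < r2"
  shows "eta_star Gc N0 R (alpha, r1, beta * r1, delta * r1, mu * r1, T)
         > eta_star Gc N0 R (alpha, r2, beta * r2, delta * r2, mu * r2, T)"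
proof -
  define I where "I = {(M, K, tau). 1 \<le> K \<and> K \<le> tau \<and> tau < T \<and> K < (M::nat)}"
  define A where "A = (\<lambda>(M, K, tau). alpha * real K * gamma_u M K tau R T)"
  define B where "B = (\<lambda>(M::nat, K::nat, tau::nat). delta + real K * (beta + 8 * (real K)\<^sup>2 * mu / (3 * real T))
       + real M * (1 + 2 * real K * mu + 4 * (real K)\<^sup>2 * mu / real T))"
  have zs: "zeta_star R (alpha, r, beta * r, delta * r, mu * r, T) = Sup ((\<lambda>i. R / (A i + r * B i)) ` I)" for r
  proof -
    have "{zeta_zf M K tau R (alpha, r, beta * r, delta * r, mu * r, T) | M K tau.
             1 \<le> K \<and> K \<le> tau \<and> tau < T \<and> K < M} = (\<lambda>i. R / (A i + r * B i)) ` I"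
      unfolding I_def A_def B_def zeta_zf_def image_def
      apply (rule set_eqI)
      apply (simp add: algebra_simps)
      apply blast
      done
    thus ?thesis unfolding zeta_star_def by simp
  qed
  have ne: "I \<noteq> {}" unfolding I_def using assms(3)
    by (auto intro!: exI[of _ "(2,1,1)"])
  have Anz: "A i \<ge> 0" if "i \<in> I" for i
  proof -
    obtain M K tau where i0: "i = (M, K, tau)" by (cases i)
    hence i: "i = (M, K, tau)" "1 \<le> K" "K \<le> tau" "tau < T" "K < M"
      using that unfolding I_def by auto
    define e where "e = 2 powr (R / (real K * (1 - real tau / real T))) - 1"
    have "real tau / real T < 1" using i by simp
    hence "R / (real K * (1 - real tau / real T)) > 0" using i assms by simp
    hence "e > 0" unfolding e_def by simp
    define a where "a = (real K + real tau) / (2 * real tau * (real M - real K)) * e"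
    have "e / (real tau * (real M - real K)) \<ge> 0" using \<open>e > 0\<close> i by simp
    hence "sqrt (a\<^sup>2 + e / (real tau * (real M - real K))) \<ge> sqrt (a\<^sup>2)"
      by (simp del: real_sqrt_abs)
    hence "a + sqrt (a\<^sup>2 + e / (real tau * (real M - real K))) \<ge> 0" by simp
    hence "gamma_u M K tau R T \<ge> 0" unfolding gamma_u_def Let_def e_def[symmetric] a_def[symmetric] .
    thus ?thesis using i assms unfolding A_def by simp
  qed
  have Bge: "B i \<ge> 1" if "i \<in> I" for i
  proof -
    obtain M K tau where i0: "i = (M, K, tau)" by (cases i)
    hence i: "i = (M, K, tau)" "1 \<le> K" "K < M"
      using that unfolding I_def by auto
    have "real M * (1 + 2 * real K * mu + 4 * (real K)\<^sup>2 * mu / real T) \<ge> 1 * 1"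
      using i assms by (intro mult_mono) auto
    moreover have "real K * (beta + 8 * (real K)\<^sup>2 * mu / (3 * real T)) \<ge> 0" using assms by simp
    ultimately show ?thesis using i(1) assms(7) unfolding B_def by simp
  qed
  have "zeta_star R (alpha, r2, beta * r2, delta * r2, mu * r2, T)
      < zeta_star R (alpha, r1, beta * r1, delta * r1, mu * r1, T)"
    unfolding zs using abstract_sup[OF ne Anz Bge assms(9,10,2)] by simp
  hence "Gc / N0 * zeta_star R (alpha, r2, beta * r2, delta * r2, mu * r2, T)
      < Gc / N0 * zeta_star R (alpha, r1, beta * r1, delta * r1, mu * r1, T)"
    using assms(4,5) by (intro mult_strict_left_mono) auto
  thus ?thesis unfolding eta_star_def by simp
qed

end
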